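(* Let $0<\alpha<1$ and $\beta=\alpha$. Then the essential norm of the generalized $\beta$-Ces\`aro operator $C_{g_\alpha}:\mathcal{B}_\alpha^0\to\mathcal{B}_\alpha^0$ is $0$.
   Context: $\mathbb{D}=\{z\in\mathbb{C}:|z|<1\}$. For $\alpha>0$, the $\alpha$-Bloch space $\mathcal{B}_\alpha$ is the space of analytic functions $f$ on $\mathbb{D}$ with $\|f\|_{\mathcal{B}_\alpha}:=\sup_{z\in\mathbb{D}}(1-|z|^2)^\alpha|f'(z)|<\infty$. $\mathcal{B}_\alpha^0=\{f\in\mathcal{B}_\alpha: f(0)=0\}$, normed by $\|\cdot\|_{\mathcal{B}_\alpha}$. For $\beta\in\mathbb{R}$, let $g_\beta(w)=\sum_{j=1}^k\frac{a_j}{(1-b_jw)^\beta}+h(w)$, where $k\ge1$, $b_1,\dots,b_k$ are distinct points of the unit circle, $a_j\in\mathbb{C}$ with $|a_j|>0$, $h$ is a bounded analytic function on $\mathbb{D}$, and powers are principal branches; $C_{g_\beta}(f)(z)=\int_0^z\frac{f(w)g_\beta(w)}{w}\,dw$. The essential norm of a bounded operator $T:X\to Y$ is $\|T\|_e=\inf\{\|T+K\|: K \text{ compact}\}$. *)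

theory Defs
  imports "HOL-Complex_Analysis.Complex_Analysis"
begin

definition bloch_norm :: "real \<Rightarrow> (complex \<Rightarrow> complex) \<Rightarrow> real" where
  "bloch_norm \<alpha> f = (SUP z\<in>ball 0 1. (1 - (cmod z)\<^sup>2) powr \<alpha> * cmod (deriv f z))"

definition bloch_space :: "real \<Rightarrow> (complex \<Rightarrow> complex) set" where
  "bloch_space \<alpha> = {f. f holomorphic_on ball 0 1 \<and>
      bdd_above ((\<lambda>z. (1 - (cmod z)\<^sup>2) powr \<alpha> * cmod (deriv f z)) ` ball 0 1)}"

definition bloch0 :: "real \<Rightarrow> (complex \<Rightarrow> complex) set" where
  "bloch0 \<alpha> = {f \<in> bloch_space \<alpha>. f 0 = 0}"

definition bloch0_linear :: "real \<Rightarrow> ((complex \<Rightarrow> complex) \<Rightarrow> (complex \<Rightarrow> complex)) \<Rightarrow> bool" where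
  "bloch0_linear \<alpha> T \<longleftrightarrow> (\<forall>f\<in>bloch0 \<alpha>. T f \<in> bloch0 \<alpha>) \<and>
     (\<forall>f\<in>bloch0 \<alpha>. \<forall>g\<in>bloch0 \<alpha>. \<forall>z\<in>ball 0 1. T (\<lambda>w. f w + g w) z = T f z + T g z) \<and>
     (\<forall>f\<in>bloch0 \<alpha>. \<forall>c. \<forall>z\<in>ball 0 1. T (\<lambda>w. c * f w) z = c * T f z)"

definition bloch0_bounded_op :: "real \<Rightarrow> ((complex \<Rightarrow> complex) \<Rightarrow> (complex \<Rightarrow> complex)) \<Rightarrow> bool" where
  "bloch0_bounded_op \<alpha> T \<longleftrightarrow> bloch0_linear \<alpha> T \<and>
     (\<exists>C. \<forall>f\<in>bloch0 \<alpha>. bloch_norm \<alpha> (T f) \<le> C * bloch_norm \<alpha> f)"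

text \<open>Compact operator: linear, and the image of the closed unit ball is relatively compact,
  i.e. every sequence in the unit ball has a subsequence whose images converge in norm.\<close>
definition bloch0_compact_op :: "real \<Rightarrow> ((complex \<Rightarrow> complex) \<Rightarrow> (complex \<Rightarrow> complex)) \<Rightarrow> bool" where
  "bloch0_compact_op \<alpha> K \<longleftrightarrow> bloch0_linear \<alpha> K \<and>
     (\<forall>f :: nat \<Rightarrow> complex \<Rightarrow> complex.
        (\<forall>n. f n \<in> bloch0 \<alpha> \<and> bloch_norm \<alpha> (f n) \<le> 1) \<longrightarrow>
        (\<exists>r g. strict_mono r \<and> g \<in> bloch0 \<alpha> \<and>
           (\<lambda>n. bloch_norm \<alpha> (\<lambda>z. K (f (r n)) z - g z)) \<longlonglongrightarrow> 0))"

definition bloch0_op_norm :: "real \<Rightarrow> ((complex \<Rightarrow> complex) \<Rightarrow> (complex \<Rightarrow> complex)) \<Rightarrow> real" where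
  "bloch0_op_norm \<alpha> T = (SUP f\<in>{f\<in>bloch0 \<alpha>. bloch_norm \<alpha> f \<le> 1}. bloch_norm \<alpha> (T f))"

definition bloch0_ess_norm :: "real \<Rightarrow> ((complex \<Rightarrow> complex) \<Rightarrow> (complex \<Rightarrow> complex)) \<Rightarrow> real" where
  "bloch0_ess_norm \<alpha> T = (INF K\<in>{K. bloch0_compact_op \<alpha> K}. bloch0_op_norm \<alpha> (\<lambda>f z. T f z + K f z))"

text \<open>The symbol g_beta, with principal branch powers (complex powr is principal).\<close>
definition g_sym :: "nat \<Rightarrow> (nat \<Rightarrow> complex) \<Rightarrow> (nat \<Rightarrow> complex) \<Rightarrow> (complex \<Rightarrow> complex) \<Rightarrow> real
    \<Rightarrow> complex \<Rightarrow> complex" where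
  "g_sym k a b h \<beta> w = (\<Sum>j<k. a j / (1 - b j * w) powr (complex_of_real \<beta>)) + h w"

definition cesaro_op :: "(complex \<Rightarrow> complex) \<Rightarrow> (complex \<Rightarrow> complex) \<Rightarrow> (complex \<Rightarrow> complex)" where
  "cesaro_op g f z = contour_integral (linepath 0 z) (\<lambda>w. f w * g w / w)"

end

theory Submission
  imports Defs
begin


lemma bloch_upper:
  assumes "f \<in> bloch_space \<alpha>" "z \<in> ball 0 1"
  shows "(1 - (cmod z)\<^sup>2) powr \<alpha> * cmod (deriv f z) \<le> bloch_norm \<alpha> f"
  using assms unfolding bloch_space_def bloch_norm_def by (auto intro: cSUP_upper)

lemma bloch_norm_nonneg: "f \<in> bloch_space \<alpha> \<Longrightarrow> 0 \<le> bloch_norm \<alpha> f"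
  using bloch_upper[of f \<alpha> 0] by (smt (verit) mem_ball norm_ge_zero powr_ge_zero zero_le_mult_iff dist_self)

lemma bloch_bound:
  assumes "f holomorphic_on ball 0 1"
    "\<And>z. z \<in> ball 0 1 \<Longrightarrow> (1 - (cmod z)\<^sup>2) powr \<alpha> * cmod (deriv f z) \<le> C"
  shows "f \<in> bloch_space \<alpha>" "bloch_norm \<alpha> f \<le> C"
proof -
  show "f \<in> bloch_space \<alpha>" using assms unfolding bloch_space_def bdd_above_def by blast
  show "bloch_norm \<alpha> f \<le> C" unfolding bloch_norm_def
    by (rule cSUP_least) (use assms in auto)
qed

lemma bloch_bound_nonneg:
  assumes "f holomorphic_on ball 0 1"
    "\<And>z. z \<in> ball 0 1 \<Longrightarrow> (1 - (cmod z)\<^sup>2) powr \<alpha> * cmod (deriv f z) \<le> C"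
  shows "0 \<le> bloch_norm \<alpha> f" "bloch_norm \<alpha> f \<le> C"
  using bloch_bound[OF assms] bloch_norm_nonneg by auto

lemma bloch_holo: "f \<in> bloch_space \<alpha> \<Longrightarrow> f holomorphic_on ball 0 1"
  unfolding bloch_space_def by auto

lemma deriv_add_ball:
  assumes "f holomorphic_on ball 0 1" "g holomorphic_on ball 0 1" "z \<in> ball 0 1"
  shows "deriv (\<lambda>w. f w + g w) z = deriv f z + deriv g z"
  by (rule deriv_add) (use assms in \<open>auto intro: holomorphic_on_imp_differentiable_at\<close>)

lemma deriv_diff_ball:
  assumes "f holomorphic_on ball 0 1" "g holomorphic_on ball 0 1" "z \<in> ball 0 1"
  shows "deriv (\<lambda>w. f w - g w) z = deriv f z - deriv g z"
  by (rule deriv_diff) (use assms in \<open>auto intro: holomorphic_on_imp_differentiable_at\<close>)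

lemma bloch_add:
  assumes "f \<in> bloch_space \<alpha>" "g \<in> bloch_space \<alpha>"
  shows "(\<lambda>z. f z + g z) \<in> bloch_space \<alpha>"
    "bloch_norm \<alpha> (\<lambda>z. f z + g z) \<le> bloch_norm \<alpha> f + bloch_norm \<alpha> g"
proof -
  have h: "(\<lambda>z. f z + g z) holomorphic_on ball 0 1"
    using assms bloch_holo by (auto intro: holomorphic_intros)
  have b: "(1 - (cmod z)\<^sup>2) powr \<alpha> * cmod (deriv (\<lambda>z. f z + g z) z) \<le> bloch_norm \<alpha> f + bloch_norm \<alpha> g"
    if z: "z \<in> ball 0 1" for z
  proof -
    have "(1 - (cmod z)\<^sup>2) powr \<alpha> * cmod (deriv (\<lambda>z. f z + g z) z)
       \<le> (1 - (cmod z)\<^sup>2) powr \<alpha> * cmod (deriv f z) + (1 - (cmod z)\<^sup>2) powr \<alpha> * cmod (deriv g z)"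
      using deriv_add_ball[OF bloch_holo[OF assms(1)] bloch_holo[OF assms(2)] z]
      by (simp add: distrib_left[symmetric] mult_left_mono norm_triangle_ineq)
    also have "\<dots> \<le> bloch_norm \<alpha> f + bloch_norm \<alpha> g"
      using bloch_upper[OF assms(1) z] bloch_upper[OF assms(2) z] by simp
    finally show ?thesis .
  qed
  show "(\<lambda>z. f z + g z) \<in> bloch_space \<alpha>" "bloch_norm \<alpha> (\<lambda>z. f z + g z) \<le> bloch_norm \<alpha> f + bloch_norm \<alpha> g"
    using bloch_bound[OF h b] by auto
qed

lemma bloch_diff:
  assumes "f \<in> bloch_space \<alpha>" "g \<in> bloch_space \<alpha>"
  shows "(\<lambda>z. f z - g z) \<in> bloch_space \<alpha>"
proof -
  have h: "(\<lambda>z. f z - g z) holomorphic_on ball 0 1"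
    using assms bloch_holo by (auto intro: holomorphic_intros)
  have b: "(1 - (cmod z)\<^sup>2) powr \<alpha> * cmod (deriv (\<lambda>z. f z - g z) z) \<le> bloch_norm \<alpha> f + bloch_norm \<alpha> g"
    if z: "z \<in> ball 0 1" for z
  proof -
    have "(1 - (cmod z)\<^sup>2) powr \<alpha> * cmod (deriv (\<lambda>z. f z - g z) z)
       \<le> (1 - (cmod z)\<^sup>2) powr \<alpha> * cmod (deriv f z) + (1 - (cmod z)\<^sup>2) powr \<alpha> * cmod (deriv g z)"
      using deriv_diff_ball[OF bloch_holo[OF assms(1)] bloch_holo[OF assms(2)] z]
      by (simp add: distrib_left[symmetric] mult_left_mono norm_triangle_ineq4)
    also have "\<dots> \<le> bloch_norm \<alpha> f + bloch_norm \<alpha> g"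
      using bloch_upper[OF assms(1) z] bloch_upper[OF assms(2) z] by simp
    finally show ?thesis .
  qed
  show "(\<lambda>z. f z - g z) \<in> bloch_space \<alpha>"
    using bloch_bound[OF h b] by auto
qed

lemma powr_le_self: "0 \<le> (u::real) \<Longrightarrow> u \<le> 1 \<Longrightarrow> 0 < p \<Longrightarrow> p \<le> 1 \<Longrightarrow> u \<le> u powr p"
proof (cases "u = 0")
  case False
  assume "0 \<le> u" "u \<le> 1" "0 < p" "p \<le> 1"
  then have "u powr 1 \<le> u powr p" by (intro powr_mono') auto
  then show ?thesis using False \<open>0 \<le> u\<close> by simp
qed simp

lemma powr_subadd:
  fixes x y p :: real
  assumes "0 \<le> x" "0 \<le> y" "0 < p" "p \<le> 1"
  shows "(x + y) powr p \<le> x powr p + y powr p"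
proof (cases "x + y = 0")
  case True then show ?thesis using assms by simp
next
  case False
  define S where "S = x + y"
  have S: "S > 0" using False assms S_def by simp
  have "x powr p = S powr p * (x/S) powr p" using S assms by (simp add: powr_divide)
  also have "\<dots> \<ge> S powr p * (x/S)"
    using S assms by (intro mult_left_mono powr_le_self) (auto simp: S_def)
  finally have 1: "x powr p \<ge> S powr p * (x/S)" .
  have "y powr p = S powr p * (y/S) powr p" using S assms by (simp add: powr_divide)
  also have "\<dots> \<ge> S powr p * (y/S)"
    using S assms by (intro mult_left_mono powr_le_self) (auto simp: S_def)
  finally have 2: "y powr p \<ge> S powr p * (y/S)" .
  have "S powr p * (x/S) + S powr p * (y/S) = S powr p"
    using S by (simp add: S_def add_divide_distrib[symmetric] distrib_left[symmetric])
  then show ?thesis using 1 2 unfolding S_def by linarith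
qed



lemma growth:
  fixes f :: "complex \<Rightarrow> complex"
  assumes hol: "f holomorphic_on ball 0 1" and al: "0 < \<alpha>" "\<alpha> < 1"
   and bnd: "\<And>z. z \<in> ball 0 1 \<Longrightarrow> (1 - (cmod z)\<^sup>2) powr \<alpha> * cmod (deriv f z) \<le> M"
   and z: "z \<in> ball 0 1" and s: "0 \<le> s" "s \<le> 1"
  shows "cmod (f z - f (of_real s * z)) \<le> M/(1-\<alpha>) * ((1 - s*cmod z) powr (1-\<alpha>) - (1 - cmod z) powr (1-\<alpha>))"
proof (cases "s = 1")
  case True then show ?thesis by simp
next
  case False
  with s have s1: "s < 1" by simp
  define r where "r = cmod z"
  have r: "0 \<le> r" "r < 1" using z by (auto simp: r_def)
  have M0: "0 \<le> M" using bnd[of 0] by (smt (verit) mem_ball norm_ge_zero powr_ge_zero zero_le_mult_iff dist_self)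
  define F where "F = (\<lambda>t::real. f (of_real t * z))"
  define F' where "F' = (\<lambda>t::real. z * deriv f (of_real t * z))"
  define \<phi> where "\<phi> = (\<lambda>t::real. - (M/(1-\<alpha>)) * (1 - t*r) powr (1-\<alpha>))"
  define \<phi>' where "\<phi>' = (\<lambda>t::real. M * r * (1 - t*r) powr (-\<alpha>))"
  have inball: "of_real t * z \<in> ball 0 1" if "0 \<le> t" "t \<le> 1" for t
  proof -
    have "cmod (of_real t * z) = t * r" using that by (simp add: r_def norm_mult)
    also have "\<dots> \<le> r" using that r by (simp add: mult_left_le_one_le)
    finally show ?thesis using r by simp
  qed
  have contf: "continuous_on (ball 0 1) f" using hol holomorphic_on_imp_continuous_on by blast
  have "continuous_on {s..1} F" unfolding F_def
    by (rule continuous_on_compose2[OF contf]) (use inball s in \<open>auto intro!: continuous_intros\<close>)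
  moreover have "continuous_on {s..1} \<phi>"
  proof -
    have xr: "x * r \<noteq> 1" if "s \<le> x" "x \<le> 1" for x
    proof -
      have "x * r \<le> r" using that r s by (simp add: mult_left_le_one_le)
      then show ?thesis using r by simp
    qed
    show ?thesis unfolding \<phi>_def
      using r s xr by (intro continuous_intros) (auto intro!: continuous_on_powr' continuous_intros)
  qed
  moreover have "(F has_vector_derivative F' t) (at t)" if t: "s < t" "t < 1" for t
  proof -
    have "((\<lambda>t. of_real t * z) has_vector_derivative z) (at t)"
      by (auto intro!: derivative_eq_intros simp: has_vector_derivative_def scaleR_conv_of_real)
    moreover have "(f has_field_derivative deriv f (of_real t * z)) (at (of_real t * z))"
      using inball[of t] t s hol by (auto intro!: holomorphic_derivI)
    ultimately show ?thesis
      unfolding F_def F'_def using field_vector_diff_chain_at[of "\<lambda>t. of_real t * z" z t f] by (simp add: o_def)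
  qed
  moreover have "(\<phi> has_vector_derivative \<phi>' t) (at t)" if t: "s < t" "t < 1" for t
  proof -
    have pos: "0 < 1 - t*r" using t s r by (smt (verit) mult_left_le_one_le mult_nonneg_nonneg)
    have "(\<phi> has_real_derivative - (M/(1-\<alpha>)) * ((1-\<alpha>) * (1 - t*r) powr (1-\<alpha> - 1) * (- r))) (at t)"
      unfolding \<phi>_def using pos by (auto intro!: derivative_eq_intros)
    moreover have "- (M/(1-\<alpha>)) * ((1-\<alpha>) * (1 - t*r) powr (1-\<alpha> - 1) * (- r)) = \<phi>' t"
      using al by (simp add: \<phi>'_def field_simps)
    ultimately show ?thesis by (simp add: has_real_derivative_iff_has_vector_derivative)
  qed
  moreover have "norm (F' t) \<le> \<phi>' t" if t: "s < t" "t < 1" for t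
  proof -
    have tz: "of_real t * z \<in> ball 0 1" using inball t s by auto
    have pos: "0 < 1 - t*r" using t s r by (smt (verit) mult_left_le_one_le mult_nonneg_nonneg)
    have n: "cmod (of_real t * z) = t * r" using t s by (simp add: r_def norm_mult)
    have le: "1 - t*r \<le> 1 - (t*r)\<^sup>2"
      using pos t s r by (simp add: power2_eq_square mult_left_le_one_le)
    have "(1 - t*r) powr \<alpha> * cmod (deriv f (of_real t * z)) \<le> (1 - (t*r)\<^sup>2) powr \<alpha> * cmod (deriv f (of_real t * z))"
      using le pos al by (intro mult_right_mono powr_mono2) auto
    also have "\<dots> \<le> M" using bnd[OF tz] n by simp
    finally have "(1 - t*r) powr \<alpha> * cmod (deriv f (of_real t * z)) \<le> M" .
    then have "cmod (deriv f (of_real t * z)) \<le> M * (1 - t*r) powr (-\<alpha>)"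
      using pos by (simp add: powr_minus field_simps)
    then show ?thesis unfolding F'_def \<phi>'_def using r
      by (simp add: norm_mult r_def[symmetric]) (metis mult.assoc mult.commute mult_left_mono)
  qed
  ultimately have "norm (F 1 - F s) \<le> \<phi> 1 - \<phi> s"
    by (intro differentiable_bound_general[OF s1, of F \<phi> F' \<phi>']) auto
  then show ?thesis
    by (simp add: F_def \<phi>_def r_def algebra_simps)
qed



lemma M_nonneg:
  assumes "\<And>z. z \<in> ball 0 1 \<Longrightarrow> (1 - (cmod z)\<^sup>2) powr \<alpha> * cmod (deriv f z) \<le> M"
  shows "0 \<le> M"
  using assms[of 0] by (smt (verit) mem_ball norm_ge_zero powr_ge_zero zero_le_mult_iff dist_self)

lemma growth0:
  fixes f :: "complex \<Rightarrow> complex"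
  assumes hol: "f holomorphic_on ball 0 1" and al: "0 < \<alpha>" "\<alpha> < 1"
   and bnd: "\<And>z. z \<in> ball 0 1 \<Longrightarrow> (1 - (cmod z)\<^sup>2) powr \<alpha> * cmod (deriv f z) \<le> M"
   and z: "z \<in> ball 0 1" and f0: "f 0 = 0"
  shows "cmod (f z) \<le> M/(1-\<alpha>) * cmod z"
proof -
  have M0: "0 \<le> M" using M_nonneg bnd by blast
  have "cmod (f z) \<le> M/(1-\<alpha>) * ((1 - 0*cmod z) powr (1-\<alpha>) - (1 - cmod z) powr (1-\<alpha>))"
    using growth[OF hol al bnd z, of 0] f0 by simp
  also have "\<dots> \<le> M/(1-\<alpha>) * cmod z"
  proof (rule mult_left_mono)
    have "1 - cmod z \<le> (1 - cmod z) powr (1-\<alpha>)" using z al by (intro powr_le_self) auto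
    then show "(1 - 0 * cmod z) powr (1 - \<alpha>) - (1 - cmod z) powr (1 - \<alpha>) \<le> cmod z" by simp
  qed (use M0 al in simp)
  finally show ?thesis .
qed

lemma growth_rho:
  fixes f :: "complex \<Rightarrow> complex"
  assumes hol: "f holomorphic_on ball 0 1" and al: "0 < \<alpha>" "\<alpha> < 1"
   and bnd: "\<And>z. z \<in> ball 0 1 \<Longrightarrow> (1 - (cmod z)\<^sup>2) powr \<alpha> * cmod (deriv f z) \<le> M"
   and z: "z \<in> ball 0 1" and s: "0 \<le> s" "s \<le> 1"
  shows "cmod (f z - f (of_real s * z)) \<le> M/(1-\<alpha>) * (1 - s) powr (1-\<alpha>)"
proof -
  have M0: "0 \<le> M" using M_nonneg bnd by blast
  define r where "r = cmod z"
  have r: "0 \<le> r" "r < 1" using z by (auto simp: r_def)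
  have "(1 - s*r) powr (1-\<alpha>) = ((1 - r) + r*(1-s)) powr (1-\<alpha>)" by (simp add: algebra_simps)
  also have "\<dots> \<le> (1 - r) powr (1-\<alpha>) + (r*(1-s)) powr (1-\<alpha>)"
    using r s al by (intro powr_subadd) auto
  also have "(r*(1-s)) powr (1-\<alpha>) \<le> (1-s) powr (1-\<alpha>)"
    using r s al by (intro powr_mono2) (auto simp: mult_left_le_one_le)
  finally have *: "(1 - s*r) powr (1-\<alpha>) - (1 - r) powr (1-\<alpha>) \<le> (1-s) powr (1-\<alpha>)" by simp
  have "cmod (f z - f (of_real s * z)) \<le> M/(1-\<alpha>) * ((1 - s*r) powr (1-\<alpha>) - (1 - r) powr (1-\<alpha>))"
    using growth[OF hol al bnd z s] by (simp add: r_def)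
  also have "\<dots> \<le> M/(1-\<alpha>) * (1 - s) powr (1-\<alpha>)"
    using * M0 al by (intro mult_left_mono) auto
  finally show ?thesis .
qed



lemma Re_pos_ball:
  fixes b w :: complex
  assumes "cmod b = 1" "w \<in> ball 0 1"
  shows "0 < Re (1 - b * w)" "1 - cmod w \<le> cmod (1 - b * w)"
proof -
  have "Re (b * w) \<le> cmod (b * w)" by (rule complex_Re_le_cmod)
  also have "\<dots> = cmod w" using assms by (simp add: norm_mult)
  finally show "0 < Re (1 - b * w)" using assms by simp
  have "cmod (1::complex) - cmod (b * w) \<le> cmod (1 - b * w)" by (rule norm_triangle_ineq2)
  then show "1 - cmod w \<le> cmod (1 - b * w)" using assms by (simp add: norm_mult)
qed

lemma g_holo:
  assumes "\<forall>j<k. cmod (b j) = 1" "h holomorphic_on ball 0 1"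
  shows "g_sym k a b h \<alpha> holomorphic_on ball 0 1"
proof -
  have t: "(\<lambda>w. a j / (1 - b j * w) powr complex_of_real \<alpha>) holomorphic_on ball 0 1" if j: "j < k" for j
  proof (intro holomorphic_intros)
    fix w :: complex assume w: "w \<in> ball 0 1"
    have "0 < Re (1 - b j * w)" using Re_pos_ball(1)[OF _ w] assms j by auto
    then show "1 - b j * w \<notin> \<real>\<^sub>\<le>\<^sub>0" by (auto simp: complex_nonpos_Reals_iff)
    then show "(1 - b j * w) powr complex_of_real \<alpha> \<noteq> 0" by (auto simp: powr_def)
  qed
  show ?thesis unfolding g_sym_def
    by (intro holomorphic_intros t assms(2)) auto
qed

lemma g_weight:
  assumes b: "\<forall>j<k. cmod (b j) = 1" and hb: "bounded (h ` ball 0 1)" and al: "0 < \<alpha>"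
  obtains B where "0 \<le> B" "\<And>z. z \<in> ball 0 1 \<Longrightarrow> (1 - (cmod z)\<^sup>2) powr \<alpha> * cmod (g_sym k a b h \<alpha> z) \<le> B"
proof -
  obtain H where H: "\<And>z. z \<in> ball 0 1 \<Longrightarrow> cmod (h z) \<le> H"
    using hb unfolding bounded_iff by (metis image_eqI)
  have H0: "0 \<le> H" using H[of 0] by (smt (verit) norm_ge_zero centre_in_ball zero_less_one)
  define B where "B = (\<Sum>j<k. 2 powr \<alpha> * cmod (a j)) + H"
  have B0: "0 \<le> B" unfolding B_def using H0 by (intro add_nonneg_nonneg sum_nonneg) auto
  have main: "(1 - (cmod z)\<^sup>2) powr \<alpha> * cmod (g_sym k a b h \<alpha> z) \<le> B" if z: "z \<in> ball 0 1" for z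
  proof -
    define w where "w = (1 - (cmod z)\<^sup>2) powr \<alpha>"
    have w0: "0 \<le> w" unfolding w_def by simp
    have w1: "w \<le> 1" unfolding w_def using z al
      by (intro powr_le1) (auto simp: abs_square_le_1 power_le_one)
    have trm: "w * cmod (a j / (1 - b j * z) powr complex_of_real \<alpha>) \<le> 2 powr \<alpha> * cmod (a j)"
      if j: "j < k" for j
    proof -
      define c where "c = cmod (1 - b j * z)"
      have c1: "1 - cmod z \<le> c" using Re_pos_ball(2)[of "b j" z] b j z by (auto simp: c_def)
      have c0: "0 < c" using c1 z by simp
      have "1 - (cmod z)\<^sup>2 = (1 - cmod z) * (1 + cmod z)" by (simp add: power2_eq_square algebra_simps)
      also have "\<dots> \<le> (1 - cmod z) * 2" using z by (intro mult_left_mono) auto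
      also have "\<dots> \<le> 2 * c" using c1 by simp
      finally have "w \<le> (2 * c) powr \<alpha>" unfolding w_def using z al
        by (intro powr_mono2) (auto simp: abs_square_le_1 power_le_one)
      also have "\<dots> = 2 powr \<alpha> * c powr \<alpha>" using c0 by (simp add: powr_mult)
      finally have wle: "w \<le> 2 powr \<alpha> * c powr \<alpha>" .
      have "cmod (a j / (1 - b j * z) powr complex_of_real \<alpha>) = cmod (a j) / c powr \<alpha>"
        by (simp add: norm_divide norm_powr_real_powr' c_def)
      then have "w * cmod (a j / (1 - b j * z) powr complex_of_real \<alpha>) = w * cmod (a j) / c powr \<alpha>" by simp
      also have "\<dots> \<le> 2 powr \<alpha> * c powr \<alpha> * cmod (a j) / c powr \<alpha>"
        using wle c0 by (intro divide_right_mono mult_right_mono) auto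
      also have "\<dots> = 2 powr \<alpha> * cmod (a j)" using c0 by simp
      finally show ?thesis .
    qed
    have "w * cmod (g_sym k a b h \<alpha> z)
        \<le> w * ((\<Sum>j<k. cmod (a j / (1 - b j * z) powr complex_of_real \<alpha>)) + cmod (h z))"
      unfolding g_sym_def using w0
      by (intro mult_left_mono order.trans[OF norm_triangle_ineq] add_right_mono norm_sum) auto
    also have "\<dots> = (\<Sum>j<k. w * cmod (a j / (1 - b j * z) powr complex_of_real \<alpha>)) + w * cmod (h z)"
      by (simp add: distrib_left sum_distrib_left)
    also have "\<dots> \<le> (\<Sum>j<k. 2 powr \<alpha> * cmod (a j)) + H"
    proof (rule add_mono)
      show "(\<Sum>j<k. w * cmod (a j / (1 - b j * z) powr complex_of_real \<alpha>)) \<le> (\<Sum>j<k. 2 powr \<alpha> * cmod (a j))"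
        by (rule sum_mono) (use trm in auto)
      have "w * cmod (h z) \<le> 1 * cmod (h z)" using w1 by (intro mult_right_mono) auto
      then show "w * cmod (h z) \<le> H" using H[OF z] by simp
    qed
    finally show ?thesis unfolding w_def B_def .
  qed
  show ?thesis using B0 main that by blast
qed



definition qf :: "(complex \<Rightarrow> complex) \<Rightarrow> complex \<Rightarrow> complex" where
  "qf f z = (if z = 0 then deriv f 0 else f z / z)"

lemma qf_holo:
  assumes "f holomorphic_on ball 0 1" "f 0 = 0"
  shows "qf f holomorphic_on ball 0 1"
proof -
  have "(\<lambda>z. if z = 0 then deriv f 0 else (f z - f 0) / (z - 0)) holomorphic_on ball 0 1"
    by (rule pole_lemma[OF assms(1)]) (simp add: interior_open)
  moreover have "(\<lambda>z. if z = 0 then deriv f 0 else (f z - f 0) / (z - 0)) = qf f"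
    using assms(2) by (auto simp: qf_def fun_eq_iff)
  ultimately show ?thesis by simp
qed

lemma qf_bound:
  fixes f :: "complex \<Rightarrow> complex"
  assumes hol: "f holomorphic_on ball 0 1" and al: "0 < \<alpha>" "\<alpha> < 1"
   and bnd: "\<And>z. z \<in> ball 0 1 \<Longrightarrow> (1 - (cmod z)\<^sup>2) powr \<alpha> * cmod (deriv f z) \<le> M"
   and z: "z \<in> ball 0 1" and f0: "f 0 = 0"
  shows "cmod (qf f z) \<le> M/(1-\<alpha>)"
proof (cases "z = 0")
  case True
  have M0: "0 \<le> M" using M_nonneg bnd by blast
  have "cmod (deriv f 0) \<le> M" using bnd[of 0] by simp
  also have "M \<le> M/(1-\<alpha>)" proof -
    have "M * (1 - \<alpha>) \<le> M" using M0 al by (simp add: mult_left_le)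
    then show ?thesis using al by (simp add: le_divide_eq)
  qed
  finally show ?thesis using True by (simp add: qf_def)
next
  case False
  have "cmod (f z) \<le> M/(1-\<alpha>) * cmod z" by (rule growth0[OF hol al bnd z f0])
  then show ?thesis using False by (simp add: qf_def norm_divide divide_le_eq)
qed

lemma primitive_deriv:
  assumes u: "u holomorphic_on ball 0 1" and z: "z \<in> ball 0 1"
  shows "((\<lambda>x. contour_integral (linepath 0 x) u) has_field_derivative u z) (at z)"
proof -
  have "((\<lambda>x. contour_integral (linepath 0 x) u) has_field_derivative u z) (at z within ball 0 1)"
  proof (rule triangle_contour_integrals_convex_primitive[where S="ball 0 1"])
    show "continuous_on (ball 0 1) u" using u holomorphic_on_imp_continuous_on by blast
    fix b c assume bc: "b \<in> ball (0::complex) 1" "c \<in> ball (0::complex) 1"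
    have "convex hull {0, b, c} \<subseteq> ball 0 1"
      using bc by (intro hull_minimal) auto
    then have "(u has_contour_integral 0) (linepath 0 b +++ linepath b c +++ linepath c 0)"
      by (intro Cauchy_theorem_triangle holomorphic_on_subset[OF u])
    then show "contour_integral (linepath 0 b) u + contour_integral (linepath b c) u + contour_integral (linepath c 0) u = 0"
      by (rule has_chain_integral_chain_integral3)
  qed (use z in auto)
  then show ?thesis using at_within_open[of z "ball 0 1"] z by simp
qed

lemma cesaro_repr: "cesaro_op G f z = contour_integral (linepath 0 z) (\<lambda>w. qf f w * G w)"
proof (cases "z = 0")
  case True then show ?thesis by (simp add: cesaro_op_def)
next
  case False
  show ?thesis unfolding cesaro_op_def contour_integral_integral
  proof (rule integral_spike[where S="{0}"])
    fix t assume t: "t \<in> {0..1} - {0::real}"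
    then have "linepath 0 z t \<noteq> 0" using False by (simp add: linepath_def)
    then show "qf f (linepath 0 z t) * G (linepath 0 z t) * vector_derivative (linepath 0 z) (at t) =
      f (linepath 0 z t) * G (linepath 0 z t) / linepath 0 z t * vector_derivative (linepath 0 z) (at t)"
      by (simp add: qf_def)
  qed auto
qed

lemma cesaro_fun: "cesaro_op G f = (\<lambda>x. contour_integral (linepath 0 x) (\<lambda>w. qf f w * G w))"
  using cesaro_repr by blast

lemma T_deriv:
  assumes "G holomorphic_on ball 0 1" "f holomorphic_on ball 0 1" "f 0 = 0" "z \<in> ball 0 1"
  shows "(cesaro_op G f has_field_derivative qf f z * G z) (at z)"
  unfolding cesaro_fun
  by (rule primitive_deriv) (use assms qf_holo in \<open>auto intro!: holomorphic_intros\<close>)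

lemma T_holo:
  assumes "G holomorphic_on ball 0 1" "f holomorphic_on ball 0 1" "f 0 = 0"
  shows "cesaro_op G f holomorphic_on ball 0 1"
  using T_deriv[OF assms] by (auto simp: holomorphic_on_open) blast

lemma T_deriv_eq:
  assumes "G holomorphic_on ball 0 1" "f holomorphic_on ball 0 1" "f 0 = 0" "z \<in> ball 0 1"
  shows "deriv (cesaro_op G f) z = qf f z * G z"
  using T_deriv[OF assms] by (rule DERIV_imp_deriv)

lemma T_zero: "cesaro_op G f 0 = 0"
  by (simp add: cesaro_op_def)

lemma bloch0_holo: "f \<in> bloch0 \<alpha> \<Longrightarrow> f holomorphic_on ball 0 1"
  by (auto simp: bloch0_def bloch_space_def)

lemma bloch0_zero: "f \<in> bloch0 \<alpha> \<Longrightarrow> f 0 = 0"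
  by (auto simp: bloch0_def)

lemma T_bloch:
  assumes al: "0 < \<alpha>" "\<alpha> < 1" and G: "G holomorphic_on ball 0 1"
    and B: "\<And>z. z \<in> ball 0 1 \<Longrightarrow> (1 - (cmod z)\<^sup>2) powr \<alpha> * cmod (G z) \<le> B"
    and f: "f \<in> bloch0 \<alpha>"
  shows "cesaro_op G f \<in> bloch0 \<alpha>" "bloch_norm \<alpha> (cesaro_op G f) \<le> B/(1-\<alpha>) * bloch_norm \<alpha> f"
proof -
  have hol: "f holomorphic_on ball 0 1" and f0: "f 0 = 0" using f by (auto simp: bloch0_def bloch_space_def)
  have fb: "f \<in> bloch_space \<alpha>" using f by (simp add: bloch0_def)
  define M where "M = bloch_norm \<alpha> f"
  have bnd: "\<And>z. z \<in> ball 0 1 \<Longrightarrow> (1 - (cmod z)\<^sup>2) powr \<alpha> * cmod (deriv f z) \<le> M"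
    unfolding M_def using bloch_upper[OF fb] by blast
  have M0: "0 \<le> M" using M_nonneg bnd by blast
  have Th: "cesaro_op G f holomorphic_on ball 0 1" by (rule T_holo[OF G hol f0])
  have wb: "(1 - (cmod z)\<^sup>2) powr \<alpha> * cmod (deriv (cesaro_op G f) z) \<le> B/(1-\<alpha>) * M"
    if z: "z \<in> ball 0 1" for z
  proof -
    have "(1 - (cmod z)\<^sup>2) powr \<alpha> * cmod (deriv (cesaro_op G f) z)
          = cmod (qf f z) * ((1 - (cmod z)\<^sup>2) powr \<alpha> * cmod (G z))"
      using T_deriv_eq[OF G hol f0 z] by (simp add: norm_mult)
    also have "\<dots> \<le> (M/(1-\<alpha>)) * B"
      using qf_bound[OF hol al bnd z f0] B[OF z] M0 al
      by (intro mult_mono) auto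
    finally show ?thesis by (simp add: mult.commute)
  qed
  show "bloch_norm \<alpha> (cesaro_op G f) \<le> B/(1-\<alpha>) * bloch_norm \<alpha> f"
    using bloch_bound(2)[OF Th wb] M_def by simp
  show "cesaro_op G f \<in> bloch0 \<alpha>"
    using bloch_bound(1)[OF Th wb] by (simp add: bloch0_def T_zero)
qed

lemma seg_in_ball: "z \<in> ball 0 1 \<Longrightarrow> closed_segment 0 z \<subseteq> ball (0::complex) 1"
  by (intro closed_segment_subset) auto

lemma T_add:
  assumes G: "G holomorphic_on ball 0 1" and f: "f \<in> bloch0 \<alpha>" and g: "g \<in> bloch0 \<alpha>"
    and z: "z \<in> ball 0 1"
  shows "cesaro_op G (\<lambda>w. f w + g w) z = cesaro_op G f z + cesaro_op G g z"
proof -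
  have hf: "f holomorphic_on ball 0 1" "f 0 = 0" using f by (auto simp: bloch0_def bloch_space_def)
  have hg: "g holomorphic_on ball 0 1" "g 0 = 0" using g by (auto simp: bloch0_def bloch_space_def)
  have eq: "qf (\<lambda>w. f w + g w) w * G w = qf f w * G w + qf g w * G w" for w
    using deriv_add_ball[OF hf(1) hg(1), of 0]
    by (auto simp: qf_def add_divide_distrib distrib_right)
  have int: "(\<lambda>w. qf u w * G w) contour_integrable_on linepath 0 z"
    if "u holomorphic_on ball 0 1" "u 0 = 0" for u
    by (rule contour_integrable_continuous_linepath, rule continuous_on_subset[OF _ seg_in_ball[OF z]],
        rule holomorphic_on_imp_continuous_on) (use that G qf_holo in \<open>auto intro!: holomorphic_intros\<close>)
  show ?thesis unfolding cesaro_repr eq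
    by (rule contour_integral_add[OF int[OF hf] int[OF hg]])
qed

lemma T_scale:
  assumes G: "G holomorphic_on ball 0 1" and f: "f \<in> bloch0 \<alpha>" and z: "z \<in> ball 0 1"
  shows "cesaro_op G (\<lambda>w. c * f w) z = c * cesaro_op G f z"
proof -
  have hf: "f holomorphic_on ball 0 1" "f 0 = 0" using f by (auto simp: bloch0_def bloch_space_def)
  have "deriv (\<lambda>w. c * f w) 0 = c * deriv f 0"
    by (rule deriv_cmult) (use hf in \<open>auto intro: holomorphic_on_imp_differentiable_at\<close>)
  then have eq: "qf (\<lambda>w. c * f w) w * G w = c * (qf f w * G w)" for w
    by (auto simp: qf_def)
  have int: "(\<lambda>w. qf f w * G w) contour_integrable_on linepath 0 z"
    by (rule contour_integrable_continuous_linepath, rule continuous_on_subset[OF _ seg_in_ball[OF z]],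
        rule holomorphic_on_imp_continuous_on) (use hf G qf_holo in \<open>auto intro!: holomorphic_intros\<close>)
  show ?thesis unfolding cesaro_repr eq
    by (rule contour_integral_lmul[OF int])
qed



lemma q_est:
  fixes f :: "complex \<Rightarrow> complex"
  assumes hol: "f holomorphic_on ball 0 1" and al: "0 < \<alpha>" "\<alpha> < 1"
   and bnd: "\<And>z. z \<in> ball 0 1 \<Longrightarrow> (1 - (cmod z)\<^sup>2) powr \<alpha> * cmod (deriv f z) \<le> M"
   and z: "z \<in> ball 0 1" and f0: "f 0 = 0" and rho: "\<rho> < cmod z" "1/2 \<le> \<rho>" "\<rho> \<le> 1"
  shows "cmod (qf f z - qf f (of_real \<rho> * z)) \<le> 3 * (M/(1-\<alpha>)) * (1-\<rho>) powr (1-\<alpha>)"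
proof -
  have M0: "0 \<le> M" using M_nonneg bnd by blast
  define w where "w = of_real \<rho> * z"
  have z0: "z \<noteq> 0" using rho by auto
  have r0: "\<rho> > 0" using rho by simp
  have w0: "w \<noteq> 0" using z0 r0 by (simp add: w_def)
  have wb: "w \<in> ball 0 1"
  proof -
    have "cmod w = \<rho> * cmod z" using r0 by (simp add: w_def norm_mult)
    also have "\<dots> \<le> cmod z" using rho by (simp add: mult_left_le_one_le)
    finally show ?thesis using z by simp
  qed
  define K where "K = M/(1-\<alpha>)"
  have K0: "0 \<le> K" using M0 al by (simp add: K_def)
  have eq: "qf f z - qf f w = (f z - f w) / z + f w * (of_real \<rho> - 1) / (of_real \<rho> * z)"
    using z0 w0 r0 by (simp add: qf_def w_def field_simps)
  have A: "cmod ((f z - f w) / z) \<le> 2 * K * (1-\<rho>) powr (1-\<alpha>)"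
  proof -
    have n1: "cmod (f z - f w) \<le> K * (1-\<rho>) powr (1-\<alpha>)"
      unfolding w_def K_def using growth_rho[OF hol al bnd z, of \<rho>] rho by simp
    have "cmod ((f z - f w) / z) = cmod (f z - f w) / cmod z" by (simp add: norm_divide)
    also have "\<dots> \<le> cmod (f z - f w) * 2"
    proof -
      have "1/2 < cmod z" using rho by simp
      then have "cmod (f z - f w) \<le> cmod (f z - f w) * 2 * cmod z"
        using mult_left_mono[of 1 "2 * cmod z" "cmod (f z - f w)"] by (simp add: mult.assoc)
      then show ?thesis using z0 by (simp add: divide_le_eq)
    qed
    also have "\<dots> \<le> 2 * K * (1-\<rho>) powr (1-\<alpha>)" using n1 by simp
    finally show ?thesis .
  qed
  have B: "cmod (f w * (of_real \<rho> - 1) / (of_real \<rho> * z)) \<le> K * (1-\<rho>) powr (1-\<alpha>)"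
  proof -
    have fw: "cmod (f w) \<le> K * (\<rho> * cmod z)"
      using growth0[OF hol al bnd wb f0] r0 by (simp add: K_def w_def norm_mult)
    have "cmod (f w * (of_real \<rho> - 1) / (of_real \<rho> * z)) = cmod (f w) * (1 - \<rho>) / (\<rho> * cmod z)"
    proof -
      have "cmod (of_real \<rho> - 1 :: complex) = 1 - \<rho>"
        using rho by (metis norm_minus_commute norm_of_real of_real_1 of_real_diff abs_of_nonneg diff_ge_0_iff_ge)
      then show ?thesis using r0 by (simp add: norm_divide norm_mult)
    qed
    also have "\<dots> \<le> K * (\<rho> * cmod z) * (1 - \<rho>) / (\<rho> * cmod z)"
      using fw rho by (intro divide_right_mono mult_right_mono) auto
    also have "\<dots> = K * (1 - \<rho>)" using r0 z0 by simp
    also have "\<dots> \<le> K * (1-\<rho>) powr (1-\<alpha>)"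
      using K0 rho al by (intro mult_left_mono powr_le_self) auto
    finally show ?thesis .
  qed
  have "cmod (qf f z - qf f w) \<le> cmod ((f z - f w) / z) + cmod (f w * (of_real \<rho> - 1) / (of_real \<rho> * z))"
    unfolding eq by (rule norm_triangle_ineq)
  also have "\<dots> \<le> 3 * K * (1-\<rho>) powr (1-\<alpha>)" using A B by simp
  finally show ?thesis by (simp add: w_def K_def)
qed



lemma T_compact_seq:
  fixes fs :: "nat \<Rightarrow> complex \<Rightarrow> complex"
  assumes al: "0 < \<alpha>" "\<alpha> < 1" and Gh: "G holomorphic_on ball 0 1"
    and B: "\<And>z. z \<in> ball 0 1 \<Longrightarrow> (1 - (cmod z)\<^sup>2) powr \<alpha> * cmod (G z) \<le> B"
    and B0: "0 \<le> B"
    and fs: "\<forall>n. fs n \<in> bloch0 \<alpha> \<and> bloch_norm \<alpha> (fs n) \<le> 1"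
  shows "\<exists>r L. strict_mono r \<and> L \<in> bloch0 \<alpha> \<and>
           (\<lambda>n. bloch_norm \<alpha> (\<lambda>z. - cesaro_op G (fs (r n)) z - L z)) \<longlonglongrightarrow> 0"
proof -
  define M where "M = 1/(1-\<alpha>)"
  have M0: "0 < M" using al by (simp add: M_def)
  have hol: "\<And>n. fs n holomorphic_on ball 0 1" and f0: "\<And>n. fs n 0 = 0"
    using fs by (auto simp: bloch0_def bloch_space_def)
  have bnd: "\<And>n z. z \<in> ball 0 1 \<Longrightarrow> (1 - (cmod z)\<^sup>2) powr \<alpha> * cmod (deriv (fs n) z) \<le> 1"
    using fs bloch_upper by (smt (verit, best) bloch0_def mem_Collect_eq)
  define q where "q = (\<lambda>n. qf (fs n))"
  have qh: "\<And>n. q n holomorphic_on ball 0 1" unfolding q_def using qf_holo hol f0 by blast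
  have qb: "\<And>n z. z \<in> ball 0 1 \<Longrightarrow> cmod (q n z) \<le> M"
    unfolding q_def M_def using qf_bound[OF hol al bnd _ f0] by simp
  have qe: "\<And>n z \<rho>. z \<in> ball 0 1 \<Longrightarrow> \<rho> < cmod z \<Longrightarrow> 1/2 \<le> \<rho> \<Longrightarrow> \<rho> \<le> 1 \<Longrightarrow>
      cmod (q n z - q n (of_real \<rho> * z)) \<le> 3 * M * (1-\<rho>) powr (1-\<alpha>)"
    unfolding q_def M_def using q_est[OF hol al bnd _ f0] by simp
  define H where "H = {u. u holomorphic_on ball 0 1 \<and> (\<forall>z\<in>ball 0 1. cmod (u z) \<le> M)}"
  obtain Q r where Qh: "Q holomorphic_on ball 0 1" and r: "strict_mono (r :: nat \<Rightarrow> nat)"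
    and pw: "\<And>x. x \<in> ball 0 1 \<Longrightarrow> ((\<lambda>n. q (r n) x) \<longlongrightarrow> Q x) sequentially"
    and un: "\<And>K. \<lbrakk>compact K; K \<subseteq> ball 0 1\<rbrakk> \<Longrightarrow> uniform_limit K (q \<circ> r) Q sequentially"
  proof (rule Montel[of "ball 0 1" H q])
    show "\<And>h. h \<in> H \<Longrightarrow> h holomorphic_on ball 0 1" unfolding H_def by auto
    show "\<And>K. compact K \<Longrightarrow> K \<subseteq> ball 0 1 \<Longrightarrow> \<exists>B. \<forall>h\<in>H. \<forall>z\<in>K. cmod (h z) \<le> B"
      unfolding H_def by blast
    show "range q \<subseteq> H" unfolding H_def using qh qb by auto
  qed auto
  have Qb: "cmod (Q z) \<le> M" if z: "z \<in> ball 0 1" for z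
    by (rule Lim_norm_ubound[OF _ pw[OF z]]) (use qb z in auto)
  have Qe: "cmod (Q z - Q (of_real \<rho> * z)) \<le> 3 * M * (1-\<rho>) powr (1-\<alpha>)"
    if z: "z \<in> ball 0 1" and rho: "\<rho> < cmod z" "1/2 \<le> \<rho>" "\<rho> \<le> 1" for z \<rho>
  proof -
    have rz: "of_real \<rho> * z \<in> ball 0 1"
    proof -
      have "cmod (of_real \<rho> * z) = \<rho> * cmod z" using rho by (simp add: norm_mult)
      also have "\<dots> \<le> cmod z" using rho by (simp add: mult_left_le_one_le)
      finally show ?thesis using z by simp
    qed
    show ?thesis
      by (rule Lim_norm_ubound[OF _ tendsto_diff[OF pw[OF z] pw[OF rz]]]) (use qe[OF z rho] in auto)
  qed
  have unif: "\<exists>N. \<forall>n\<ge>N. \<forall>z\<in>ball 0 1. cmod (q (r n) z - Q z) \<le> \<epsilon>" if e: "\<epsilon> > 0" for \<epsilon>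
  proof -
    define c where "c = \<epsilon> / (12 * M)"
    have c0: "c > 0" using e M0 by (simp add: c_def)
    define \<delta> where "\<delta> = min (1/2) (c powr (1/(1-\<alpha>)))"
    have d0: "0 < \<delta>" "\<delta> \<le> 1/2" using c0 by (auto simp: \<delta>_def)
    have dp: "\<delta> powr (1-\<alpha>) \<le> c"
    proof -
      have "\<delta> powr (1-\<alpha>) \<le> (c powr (1/(1-\<alpha>))) powr (1-\<alpha>)"
        using d0 al by (intro powr_mono2) (auto simp: \<delta>_def)
      also have "\<dots> = c" using al c0 by (simp add: powr_powr)
      finally show ?thesis .
    qed
    define \<rho> where "\<rho> = 1 - \<delta>"
    have rho: "1/2 \<le> \<rho>" "\<rho> < 1" using d0 by (auto simp: \<rho>_def)
    have small: "3 * M * (1-\<rho>) powr (1-\<alpha>) \<le> \<epsilon>/4"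
    proof -
      have "3 * M * (1-\<rho>) powr (1-\<alpha>) \<le> 3 * M * c"
        using dp M0 by (simp add: \<rho>_def)
      also have "\<dots> = \<epsilon>/4" using M0 by (simp add: c_def)
      finally show ?thesis .
    qed
    have Kc: "compact (cball (0::complex) \<rho>)" "cball (0::complex) \<rho> \<subseteq> ball 0 1" using rho by auto
    have "\<forall>\<^sub>F n in sequentially. \<forall>x\<in>cball 0 \<rho>. dist ((q \<circ> r) n x) (Q x) < \<epsilon>/2"
    proof -
      have "\<epsilon>/2 > 0" using e by simp
      then show ?thesis using un[OF Kc] unfolding uniform_limit_iff by blast
    qed
    then obtain N where N: "\<And>n x. n \<ge> N \<Longrightarrow> x \<in> cball 0 \<rho> \<Longrightarrow> cmod (q (r n) x - Q x) < \<epsilon>/2"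
      unfolding eventually_sequentially dist_norm o_def by (metis mem_cball_0)
    have "\<forall>n\<ge>N. \<forall>z\<in>ball 0 1. cmod (q (r n) z - Q z) \<le> \<epsilon>"
    proof (intro allI impI ballI)
      fix n z assume n: "n \<ge> N" and z: "z \<in> ball (0::complex) 1"
      show "cmod (q (r n) z - Q z) \<le> \<epsilon>"
      proof (cases "cmod z \<le> \<rho>")
        case True
        then have "cmod (q (r n) z - Q z) < \<epsilon>/2" using N[OF n, of z] by simp
        then show ?thesis using norm_ge_zero[of "q (r n) z - Q z"] by linarith
      next
        case False
        define w where "w = of_real \<rho> * z"
        have wc: "w \<in> cball 0 \<rho>"
          using rho z by (simp add: w_def norm_mult mult_left_le_one_le)
        have eqn: "cmod (q (r n) z - Q z) = cmod ((q (r n) z - q (r n) w) + (q (r n) w - Q w) - (Q z - Q w))"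
          by (rule arg_cong[of _ _ cmod]) (simp add: algebra_simps)
        have "cmod (q (r n) z - Q z) \<le> cmod (q (r n) z - q (r n) w) + cmod (q (r n) w - Q w) + cmod (Q z - Q w)"
          using norm_triangle_ineq4[of "q (r n) z - q (r n) w + (q (r n) w - Q w)" "Q z - Q w"]
            norm_triangle_ineq[of "q (r n) z - q (r n) w" "q (r n) w - Q w"] eqn by linarith
        also have "\<dots> \<le> \<epsilon>/4 + \<epsilon>/2 + \<epsilon>/4"
          using qe[OF z, of \<rho> "r n"] Qe[OF z, of \<rho>] N[OF n wc] False rho small
          by (intro add_mono) (auto simp: w_def)
        finally show ?thesis by simp
      qed
    qed
    then show ?thesis by blast
  qed
  define P where "P = (\<lambda>z. contour_integral (linepath 0 z) (\<lambda>w. Q w * G w))"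
  define L where "L = (\<lambda>z. - P z)"
  have QGh: "(\<lambda>w. Q w * G w) holomorphic_on ball 0 1" using Qh Gh by (auto intro!: holomorphic_intros)
  have Pd: "\<And>z. z \<in> ball 0 1 \<Longrightarrow> (P has_field_derivative Q z * G z) (at z)"
    unfolding P_def by (rule primitive_deriv[OF QGh])
  have Ld: "\<And>z. z \<in> ball 0 1 \<Longrightarrow> (L has_field_derivative - (Q z * G z)) (at z)"
    unfolding L_def by (auto intro!: derivative_eq_intros Pd)
  have Lh: "L holomorphic_on ball 0 1" using Ld by (auto simp: holomorphic_on_open) blast
  have Lb: "(1 - (cmod z)\<^sup>2) powr \<alpha> * cmod (deriv L z) \<le> M * B" if z: "z \<in> ball 0 1" for z
  proof -
    have "(1 - (cmod z)\<^sup>2) powr \<alpha> * cmod (deriv L z) = cmod (Q z) * ((1 - (cmod z)\<^sup>2) powr \<alpha> * cmod (G z))"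
      using DERIV_imp_deriv[OF Ld[OF z]] by (simp add: norm_mult)
    also have "\<dots> \<le> M * B" using Qb[OF z] B[OF z] M0 by (intro mult_mono) auto
    finally show ?thesis .
  qed
  have L0: "L \<in> bloch0 \<alpha>"
    using bloch_bound(1)[OF Lh Lb] by (simp add: bloch0_def L_def P_def)
  define Dn where "Dn = (\<lambda>n z. - cesaro_op G (fs (r n)) z - L z)"
  have Dd: "(Dn n has_field_derivative (Q z - q (r n) z) * G z) (at z)" if z: "z \<in> ball 0 1" for n z
  proof -
    have "(Dn n has_field_derivative - (q (r n) z * G z) - - (Q z * G z)) (at z)"
      unfolding Dn_def q_def
      by (intro derivative_intros T_deriv[OF Gh hol f0 z] Ld[OF z])
    then show ?thesis by (simp add: algebra_simps)
  qed
  have Dh: "Dn n holomorphic_on ball 0 1" for n using Dd by (auto simp: holomorphic_on_open) blast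
  have "(\<lambda>n. bloch_norm \<alpha> (Dn n)) \<longlonglongrightarrow> 0"
  proof (rule LIMSEQ_I)
    fix e :: real assume e: "0 < e"
    define \<epsilon> where "\<epsilon> = e / (2 * (B + 1))"
    have eps: "\<epsilon> > 0" using e B0 by (simp add: \<epsilon>_def)
    obtain N where N: "\<And>n z. n \<ge> N \<Longrightarrow> z \<in> ball 0 1 \<Longrightarrow> cmod (q (r n) z - Q z) \<le> \<epsilon>"
      using unif[OF eps] by blast
    have "norm (bloch_norm \<alpha> (Dn n) - 0) < e" if n: "n \<ge> N" for n
    proof -
      have wb: "(1 - (cmod z)\<^sup>2) powr \<alpha> * cmod (deriv (Dn n) z) \<le> \<epsilon> * B" if z: "z \<in> ball 0 1" for z
      proof -
        have "(1 - (cmod z)\<^sup>2) powr \<alpha> * cmod (deriv (Dn n) z)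
              = cmod (Q z - q (r n) z) * ((1 - (cmod z)\<^sup>2) powr \<alpha> * cmod (G z))"
          using DERIV_imp_deriv[OF Dd[OF z]] by (simp add: norm_mult)
        also have "\<dots> \<le> \<epsilon> * B"
          using N[OF n z] B[OF z] eps by (intro mult_mono) (auto simp: norm_minus_commute)
        finally show ?thesis .
      qed
      have "0 \<le> bloch_norm \<alpha> (Dn n)" "bloch_norm \<alpha> (Dn n) \<le> \<epsilon> * B"
        using bloch_bound_nonneg[OF Dh wb] by auto
      moreover have "\<epsilon> * B < e"
      proof -
        have "\<epsilon> * B \<le> \<epsilon> * (B + 1)" using eps by simp
        also have "\<dots> = e/2" using B0 by (simp add: \<epsilon>_def field_simps)
        finally show ?thesis using e by simp
      qed
      ultimately show ?thesis by simp
    qed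
    then show "\<exists>no. \<forall>n\<ge>no. norm (bloch_norm \<alpha> (Dn n) - 0) < e" by blast
  qed
  then show ?thesis using r L0 unfolding Dn_def by blast
qed



lemma bloch0_neg:
  assumes "u \<in> bloch0 \<alpha>"
  shows "(\<lambda>z. - u z) \<in> bloch0 \<alpha>"
proof -
  have ub: "u \<in> bloch_space \<alpha>" and u0: "u 0 = 0" using assms by (auto simp: bloch0_def)
  have uh: "u holomorphic_on ball 0 1" using bloch_holo[OF ub] .
  have h: "(\<lambda>z. - u z) holomorphic_on ball 0 1" using uh by (auto intro: holomorphic_intros)
  have "(1 - (cmod z)\<^sup>2) powr \<alpha> * cmod (deriv (\<lambda>z. - u z) z) \<le> bloch_norm \<alpha> u" if z: "z \<in> ball 0 1" for z
  proof -
    have "deriv (\<lambda>z. - u z) z = - deriv u z"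
      by (rule deriv_minus) (use uh z in \<open>auto intro: holomorphic_on_imp_differentiable_at\<close>)
    then show ?thesis using bloch_upper[OF ub z] by simp
  qed
  then show ?thesis using bloch_bound(1)[OF h] u0 by (auto simp: bloch0_def)
qed

lemma bloch_norm_zero: "bloch_norm \<alpha> (\<lambda>z. 0) = 0"
  unfolding bloch_norm_def by simp

lemma bloch0_zero_fun: "(\<lambda>z. 0) \<in> bloch0 \<alpha>"
  unfolding bloch0_def bloch_space_def by auto

theorem corollary4p2:
  fixes \<alpha> :: real and k :: nat and a b :: "nat \<Rightarrow> complex" and h :: "complex \<Rightarrow> complex"
  assumes "0 < \<alpha>" and "\<alpha> < 1"
    and "k \<ge> 1"
    and "\<forall>j<k. cmod (b j) = 1"
    and "inj_on b {..<k}"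
    and "\<forall>j<k. a j \<noteq> 0"
    and "h holomorphic_on ball 0 1" and "bounded (h ` ball 0 1)"
  shows "bloch0_bounded_op \<alpha> (cesaro_op (g_sym k a b h \<alpha>)) \<and>
         bloch0_ess_norm \<alpha> (cesaro_op (g_sym k a b h \<alpha>)) = 0"
proof -
  note al = assms(1,2)
  define G where "G = g_sym k a b h \<alpha>"
  define T where "T = cesaro_op G"
  have Gh: "G holomorphic_on ball 0 1" unfolding G_def using g_holo assms(4,7) by blast
  obtain B where B0: "0 \<le> B" and B: "\<And>z. z \<in> ball 0 1 \<Longrightarrow> (1 - (cmod z)\<^sup>2) powr \<alpha> * cmod (G z) \<le> B"
    unfolding G_def using g_weight[OF assms(4,8,1)] by blast
  define C where "C = B/(1-\<alpha>)"
  have C0: "0 \<le> C" using B0 al by (simp add: C_def)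
  have Tb: "\<And>f. f \<in> bloch0 \<alpha> \<Longrightarrow> T f \<in> bloch0 \<alpha>"
    and Tn: "\<And>f. f \<in> bloch0 \<alpha> \<Longrightarrow> bloch_norm \<alpha> (T f) \<le> C * bloch_norm \<alpha> f"
    unfolding T_def C_def using T_bloch[OF al Gh B] by auto
  have lin: "bloch0_linear \<alpha> T"
    unfolding bloch0_linear_def using Tb T_add[OF Gh] T_scale[OF Gh] by (auto simp: T_def)
  have bop: "bloch0_bounded_op \<alpha> T"
    unfolding bloch0_bounded_op_def using lin Tn by blast
  define S where "S = {f \<in> bloch0 \<alpha>. bloch_norm \<alpha> f \<le> 1}"
  have zS: "(\<lambda>z. 0) \<in> S" unfolding S_def using bloch0_zero_fun bloch_norm_zero by simp
  define K0 where "K0 = (\<lambda>f z. - T f z)"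
  have K0c: "bloch0_compact_op \<alpha> K0"
    unfolding bloch0_compact_op_def
  proof (intro conjI allI impI)
    show "bloch0_linear \<alpha> K0"
      using lin bloch0_neg unfolding bloch0_linear_def K0_def by auto
    fix fs :: "nat \<Rightarrow> complex \<Rightarrow> complex"
    assume "\<forall>n. fs n \<in> bloch0 \<alpha> \<and> bloch_norm \<alpha> (fs n) \<le> 1"
    then show "\<exists>r g. strict_mono r \<and> g \<in> bloch0 \<alpha> \<and> (\<lambda>n. bloch_norm \<alpha> (\<lambda>z. K0 (fs (r n)) z - g z)) \<longlonglongrightarrow> 0"
      using T_compact_seq[OF al Gh B B0] unfolding K0_def T_def by blast
  qed
  have opK0: "bloch0_op_norm \<alpha> (\<lambda>f z. T f z + K0 f z) = 0"
  proof -
    have eq: "(\<lambda>f z. T f z + K0 f z) = (\<lambda>f z. 0)" by (simp add: K0_def)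
    have ne: "S \<noteq> {}" using zS by blast
    show ?thesis unfolding eq bloch0_op_norm_def bloch_norm_zero S_def[symmetric]
      using ne by simp
  qed
  have opnn: "0 \<le> bloch0_op_norm \<alpha> (\<lambda>f z. T f z + K f z)" if Kc: "bloch0_compact_op \<alpha> K" for K
  proof -
    have Klin: "\<And>f. f \<in> bloch0 \<alpha> \<Longrightarrow> K f \<in> bloch0 \<alpha>"
      using Kc unfolding bloch0_compact_op_def bloch0_linear_def by blast
    have sp: "\<And>f. f \<in> bloch0 \<alpha> \<Longrightarrow> f \<in> bloch_space \<alpha>" by (simp add: bloch0_def)
    have nn: "0 \<le> bloch_norm \<alpha> (\<lambda>z. T f z + K f z)" if "f \<in> bloch0 \<alpha>" for f
      using bloch_add(1)[OF sp[OF Tb[OF that]] sp[OF Klin[OF that]]] bloch_norm_nonneg by blast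
    have bdd: "bdd_above ((\<lambda>f. bloch_norm \<alpha> (\<lambda>z. T f z + K f z)) ` S)"
    proof (rule ccontr)
      assume nb: "\<not> ?thesis"
      have "\<forall>n::nat. \<exists>f. f \<in> S \<and> bloch_norm \<alpha> (\<lambda>z. T f z + K f z) > real n"
      proof
        fix n :: nat
        from nb have "\<not> (\<forall>x\<in>(\<lambda>f. bloch_norm \<alpha> (\<lambda>z. T f z + K f z)) ` S. x \<le> real n)"
          unfolding bdd_above_def by blast
        then show "\<exists>f. f \<in> S \<and> bloch_norm \<alpha> (\<lambda>z. T f z + K f z) > real n" by (auto simp: not_le)
      qed
      then have "\<exists>fs. \<forall>n. fs n \<in> S \<and> bloch_norm \<alpha> (\<lambda>z. T (fs n) z + K (fs n) z) > real n"
        by (rule choice)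
      then obtain fs where fsa: "\<forall>n. fs n \<in> S \<and> bloch_norm \<alpha> (\<lambda>z. T (fs n) z + K (fs n) z) > real n"
        by blast
      have fs: "\<And>n. fs n \<in> S" "\<And>n. bloch_norm \<alpha> (\<lambda>z. T (fs n) z + K (fs n) z) > real n"
        using fsa by auto
      have "\<forall>n. fs n \<in> bloch0 \<alpha> \<and> bloch_norm \<alpha> (fs n) \<le> 1" using fs(1) by (auto simp: S_def)
      then obtain r g0 where r: "strict_mono r" and g0: "g0 \<in> bloch0 \<alpha>"
        and lim: "(\<lambda>n. bloch_norm \<alpha> (\<lambda>z. K (fs (r n)) z - g0 z)) \<longlonglongrightarrow> 0"
        using Kc unfolding bloch0_compact_op_def by blast
      have "\<forall>\<^sub>F n in sequentially. bloch_norm \<alpha> (\<lambda>z. K (fs (r n)) z - g0 z) < 1"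
        using order_tendstoD(2)[OF lim] by simp
      then obtain N where N: "\<And>n. n \<ge> N \<Longrightarrow> bloch_norm \<alpha> (\<lambda>z. K (fs (r n)) z - g0 z) < 1"
        unfolding eventually_sequentially by blast
      define n where "n = max N (nat \<lceil>C + 1 + bloch_norm \<alpha> g0\<rceil>)"
      define f where "f = fs (r n)"
      have fb: "f \<in> bloch0 \<alpha>" and f1: "bloch_norm \<alpha> f \<le> 1" using fs(1) by (auto simp: S_def f_def)
      have "(\<lambda>z. T f z + K f z) = (\<lambda>z. T f z + ((K f z - g0 z) + g0 z))" by simp
      then have "bloch_norm \<alpha> (\<lambda>z. T f z + K f z) = bloch_norm \<alpha> (\<lambda>z. T f z + ((K f z - g0 z) + g0 z))"
        by simp
      also have "\<dots> \<le> bloch_norm \<alpha> (T f) + bloch_norm \<alpha> (\<lambda>z. (K f z - g0 z) + g0 z)"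
        using bloch_add(2)[OF sp[OF Tb[OF fb]] bloch_add(1)[OF bloch_diff[OF sp[OF Klin[OF fb]] sp[OF g0]] sp[OF g0]]]
        by simp
      also have "\<dots> \<le> bloch_norm \<alpha> (T f) + (bloch_norm \<alpha> (\<lambda>z. K f z - g0 z) + bloch_norm \<alpha> g0)"
        using bloch_add(2)[OF bloch_diff[OF sp[OF Klin[OF fb]] sp[OF g0]] sp[OF g0]] by simp
      also have "\<dots> \<le> C + (1 + bloch_norm \<alpha> g0)"
      proof -
        have "bloch_norm \<alpha> (T f) \<le> C * bloch_norm \<alpha> f" by (rule Tn[OF fb])
        also have "\<dots> \<le> C" using f1 C0 by (simp add: mult_left_le)
        finally have 1: "bloch_norm \<alpha> (T f) \<le> C" .
        have 2: "bloch_norm \<alpha> (\<lambda>z. K f z - g0 z) < 1" using N[of n] by (simp add: f_def n_def)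
        show ?thesis using 1 2 by simp
      qed
      also have "\<dots> \<le> real n" unfolding n_def by linarith
      also have "\<dots> \<le> real (r n)" using seq_suble[OF r, of n] by simp
      finally have "bloch_norm \<alpha> (\<lambda>z. T f z + K f z) \<le> real (r n)" .
      then show False using fs(2)[of "r n"] by (simp add: f_def)
    qed
    have "0 \<le> bloch_norm \<alpha> (\<lambda>z. T (\<lambda>z. 0) z + K (\<lambda>z. 0) z)" using nn bloch0_zero_fun by blast
    also have "\<dots> \<le> bloch0_op_norm \<alpha> (\<lambda>f z. T f z + K f z)"
      unfolding bloch0_op_norm_def S_def[symmetric] by (rule cSUP_upper[OF zS bdd])
    finally show ?thesis .
  qed
  have ess: "bloch0_ess_norm \<alpha> T = 0"
    unfolding bloch0_ess_norm_def
  proof (rule antisym)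
    have "bdd_below ((\<lambda>K. bloch0_op_norm \<alpha> (\<lambda>f z. T f z + K f z)) ` {K. bloch0_compact_op \<alpha> K})"
      using opnn by (intro bdd_belowI[of _ 0]) auto
    then have "(INF K\<in>{K. bloch0_compact_op \<alpha> K}. bloch0_op_norm \<alpha> (\<lambda>f z. T f z + K f z))
          \<le> bloch0_op_norm \<alpha> (\<lambda>f z. T f z + K0 f z)"
      by (intro cINF_lower) (use K0c in auto)
    then show "(INF K\<in>{K. bloch0_compact_op \<alpha> K}. bloch0_op_norm \<alpha> (\<lambda>f z. T f z + K f z)) \<le> 0"
      using opK0 by simp
    show "0 \<le> (INF K\<in>{K. bloch0_compact_op \<alpha> K}. bloch0_op_norm \<alpha> (\<lambda>f z. T f z + K f z))"
      by (rule cINF_greatest) (use K0c opnn in auto)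
  qed
  show ?thesis using bop ess unfolding T_def G_def by simp
qed


end
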